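(* Let $\gamma>0$, let $b_1,b_2,d_1,d_2,d_3$ be constants with $b_1+b_2=1$ and $d_1+d_2+d_3=1$, and let $A,B,C,k,p$ be $C^\infty$ functions on a neighbourhood of $(x_m,z_n)$. Then $$\tilde{\mathcal{L}}(p)_{m,n}+\tilde I(k^2Cp)_{m,n}=\Big[\frac{\partial}{\partial x}\Big(A\frac{\partial p}{\partial x}\Big)+\frac{\partial}{\partial z}\Big(B\frac{\partial p}{\partial z}\Big)+Ck^2p\Big](x_m,z_n)+O(h^4)\qquad(h\to0).$$ In particular the optimal point-weighting 17-point scheme $\tilde{\mathcal{L}}(p)_{m,n}+\tilde I(k^2Cp)_{m,n}=\tilde g_{m,n}$ is pointwise consistent with the Helmholtz–PML equation $\partial_x(A\partial_xp)+\partial_z(B\partial_zp)+Ck^2p=\tilde g$ and is of fourth order, for arbitrary values of the parameters subject to the two sum constraints.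
   Context: Grid: $\Delta x=h$, $\Delta z=\gamma h$, $x_{m+i}=x_m+ih$, $z_{n+j}=z_n+j\gamma h$, $p_{i,j}=p(x_i,z_j)$; for a function $F$, $F_{m+\frac{j}{2},n}=F(x_m+\tfrac j2h,z_n)$, $F_{m,n+\frac l2}=F(x_m,z_n+\tfrac l2\gamma h)$. The operator $\mathcal{L}_x$ acting on five values $(u_{m-2,n},\dots,u_{m+2,n})$: $\mathcal{L}_x[u]_{m,n}=h^{-2}\big[-\tfrac98A_{m-\frac12,n}(\tfrac1{24}u_{m-2,n}-\tfrac98u_{m-1,n}+\tfrac98u_{m,n}-\tfrac1{24}u_{m+1,n})+\tfrac1{24}A_{m-\frac32,n}(-\tfrac{11}{12}u_{m-2,n}+\tfrac{17}{24}u_{m-1,n}+\tfrac38u_{m,n}-\tfrac5{24}u_{m+1,n}+\tfrac1{24}u_{m+2,n})-\tfrac1{24}A_{m+\frac32,n}(-\tfrac1{24}u_{m-2,n}+\tfrac5{24}u_{m-1,n}-\tfrac38u_{m,n}-\tfrac{17}{24}u_{m+1,n}+\tfrac{11}{12}u_{m+2,n})+\tfrac98A_{m+\frac12,n}(\tfrac1{24}u_{m-1,n}-\tfrac98u_{m,n}+\tfrac98u_{m+1,n}-\tfrac1{24}u_{m+2,n})\big]$; $\mathcal{L}_z[u]_{m,n}$ is the same formula with $h^{-2}\to(\gamma h)^{-2}$, $A\to B$ with half-shifts in the second index, and $u_{m+i,n}\to u_{m,n+i}$. Point-weighted values: $\hat p_{m,n}=\tilde p_{m,n}=b_1p_{m,n}$,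 and for $i\in\{\pm1,\pm2\}$, with $s=|i|$: $\hat p_{m+i,n}=b_1p_{m+i,n}+\tfrac{b_2}{2}(p_{m+i,n+s}+p_{m+i,n-s}-p_{m,n+s}-p_{m,n-s})$, $\tilde p_{m,n+i}=b_1p_{m,n+i}+\tfrac{b_2}{2}(p_{m+s,n+i}+p_{m-s,n+i}-p_{m+s,n}-p_{m-s,n})$. Then $\tilde{\mathcal{L}}(p)_{m,n}=\mathcal{L}_x[\hat p]_{m,n}+\mathcal{L}_z[\tilde p]_{m,n}$ (i.e. $u_{m+i,n}=\hat p_{m+i,n}$ in $\mathcal{L}_x$ and $u_{m,n+i}=\tilde p_{m,n+i}$ in $\mathcal{L}_z$). With $Q_{i,j}=k^2(x_i,z_j)C(x_i,z_j)p_{i,j}$: $I^{(2)}(Q)_{m,n}=\tfrac13(Q_{m\pm1,n}+Q_{m,n\pm1})-\tfrac1{12}(Q_{m\pm2,n}+Q_{m,n\pm2})$ (sums over both signs), $I^{(3)}(Q)_{m,n}=\tfrac13(Q_{m-1,n-1}+Q_{m+1,n+1}+Q_{m-1,n+1}+Q_{m+1,n-1})-\tfrac1{12}(Q_{m-2,n-2}+Q_{m+2,n+2}+Q_{m-2,n+2}+Q_{m+2,n-2})$, and $\tilde I(Q)_{m,n}=d_1Q_{m,n}+d_2I^{(2)}(Q)_{m,n}+d_3I^{(3)}(Q)_{m,n}$. Here $\tilde g_{m,n}=\tilde g(x_m,z_n)$. Pointwise consistency means: for every smooth $\varphi$, the difference between the PDE residual at $(x_m,z_n)$ and the scheme residual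 tends to $0$ as $h\to0$. *)

theory Defs
  imports "HOL-Analysis.Analysis" "HOL-Library.Landau_Symbols"
begin

text \<open>C-infinity on an open set U of the plane, for complex-valued functions of two real
  variables, written out through partial derivatives: there is a family D i j (playing the
  role of the mixed partial of order i in x and j in z) with D 0 0 = f on U, every D i j
  continuous on U, and D (i+1) j resp. D i (j+1) the partial derivative of D i j in x
  resp. z at every point of U.\<close>
definition smooth2_on :: "(real \<times> real) set \<Rightarrow> (real \<times> real \<Rightarrow> complex) \<Rightarrow> bool" where
  "smooth2_on U f \<longleftrightarrow> (\<exists>D :: nat \<Rightarrow> nat \<Rightarrow> real \<times> real \<Rightarrow> complex.
      (\<forall>y\<in>U. D 0 0 y = f y) \<and>
      (\<forall>i j. continuous_on U (D i j)) \<and>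
      (\<forall>i j x z. (x, z) \<in> U \<longrightarrow>
         ((\<lambda>t. D i j (t, z)) has_vector_derivative D (Suc i) j (x, z)) (at x) \<and>
         ((\<lambda>t. D i j (x, t)) has_vector_derivative D i (Suc j) (x, z)) (at z)))"

text \<open>Grid values p_{m+i,n+j} with (x_m,z_n) = (x0,z0), dx = h, dz = gamma h.\<close>
definition gv :: "(real \<times> real \<Rightarrow> complex) \<Rightarrow> real \<Rightarrow> real \<Rightarrow> real \<Rightarrow> real \<Rightarrow> int \<Rightarrow> int \<Rightarrow> complex" where
  "gv P x0 z0 \<gamma> h i j = P (x0 + real_of_int i * h, z0 + real_of_int j * \<gamma> * h)"

text \<open>The bracket of the five-point operator, with coefficient values at the half points
  -3/2, -1/2, +1/2, +3/2 and the five values u(-2..2).\<close>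
definition L5 :: "complex \<Rightarrow> complex \<Rightarrow> complex \<Rightarrow> complex \<Rightarrow> (int \<Rightarrow> complex) \<Rightarrow> complex" where
  "L5 am3 am1 ap1 ap3 u =
     - (9/8) * am1 * (1/24 * u (-2) - 9/8 * u (-1) + 9/8 * u 0 - 1/24 * u 1)
     + 1/24 * am3 * (- (11/12) * u (-2) + 17/24 * u (-1) + 3/8 * u 0 - 5/24 * u 1 + 1/24 * u 2)
     - 1/24 * ap3 * (- (1/24) * u (-2) + 5/24 * u (-1) - 3/8 * u 0 - 17/24 * u 1 + 11/12 * u 2)
     + 9/8 * ap1 * (1/24 * u (-1) - 9/8 * u 0 + 9/8 * u 1 - 1/24 * u 2)"

definition Lx :: "(real \<times> real \<Rightarrow> complex) \<Rightarrow> real \<Rightarrow> real \<Rightarrow> real \<Rightarrow> (int \<Rightarrow> complex) \<Rightarrow> complex" where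
  "Lx A x0 z0 h u =
     (let a = (\<lambda>j::int. A (x0 + real_of_int j / 2 * h, z0))
      in complex_of_real (h powi (-2)) * L5 (a (-3)) (a (-1)) (a 1) (a 3) u)"

definition Lz :: "(real \<times> real \<Rightarrow> complex) \<Rightarrow> real \<Rightarrow> real \<Rightarrow> real \<Rightarrow> real \<Rightarrow> (int \<Rightarrow> complex) \<Rightarrow> complex" where
  "Lz B x0 z0 \<gamma> h u =
     (let b = (\<lambda>l::int. B (x0, z0 + real_of_int l / 2 * \<gamma> * h))
      in complex_of_real ((\<gamma> * h) powi (-2)) * L5 (b (-3)) (b (-1)) (b 1) (b 3) u)"

definition phat :: "complex \<Rightarrow> complex \<Rightarrow> (real \<times> real \<Rightarrow> complex) \<Rightarrow> real \<Rightarrow> real \<Rightarrow> real \<Rightarrow> real \<Rightarrow> int \<Rightarrow> complex" where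
  "phat b1 b2 P x0 z0 \<gamma> h i =
     (let p = gv P x0 z0 \<gamma> h; s = \<bar>i\<bar> in
      if i = 0 then b1 * p 0 0
      else b1 * p i 0 + b2 / 2 * (p i s + p i (-s) - p 0 s - p 0 (-s)))"

definition ptilde :: "complex \<Rightarrow> complex \<Rightarrow> (real \<times> real \<Rightarrow> complex) \<Rightarrow> real \<Rightarrow> real \<Rightarrow> real \<Rightarrow> real \<Rightarrow> int \<Rightarrow> complex" where
  "ptilde b1 b2 P x0 z0 \<gamma> h i =
     (let p = gv P x0 z0 \<gamma> h; s = \<bar>i\<bar> in
      if i = 0 then b1 * p 0 0
      else b1 * p 0 i + b2 / 2 * (p s i + p (-s) i - p s 0 - p (-s) 0))"

definition Ltilde :: "complex \<Rightarrow> complex \<Rightarrow> (real \<times> real \<Rightarrow> complex) \<Rightarrow> (real \<times> real \<Rightarrow> complex)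
    \<Rightarrow> (real \<times> real \<Rightarrow> complex) \<Rightarrow> real \<Rightarrow> real \<Rightarrow> real \<Rightarrow> real \<Rightarrow> complex" where
  "Ltilde b1 b2 A B P x0 z0 \<gamma> h =
     Lx A x0 z0 h (phat b1 b2 P x0 z0 \<gamma> h) + Lz B x0 z0 \<gamma> h (ptilde b1 b2 P x0 z0 \<gamma> h)"

definition Itilde :: "complex \<Rightarrow> complex \<Rightarrow> complex \<Rightarrow> (real \<times> real \<Rightarrow> complex) \<Rightarrow> (real \<times> real \<Rightarrow> complex)
    \<Rightarrow> (real \<times> real \<Rightarrow> complex) \<Rightarrow> real \<Rightarrow> real \<Rightarrow> real \<Rightarrow> real \<Rightarrow> complex" where
  "Itilde d1 d2 d3 k C P x0 z0 \<gamma> h =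
     (let Q = gv (\<lambda>y. (k y)\<^sup>2 * C y * P y) x0 z0 \<gamma> h;
          I2 = 1/3 * (Q 1 0 + Q (-1) 0 + Q 0 1 + Q 0 (-1))
               - 1/12 * (Q 2 0 + Q (-2) 0 + Q 0 2 + Q 0 (-2));
          I3 = 1/3 * (Q (-1) (-1) + Q 1 1 + Q (-1) 1 + Q 1 (-1))
               - 1/12 * (Q (-2) (-2) + Q 2 2 + Q (-2) 2 + Q 2 (-2))
      in d1 * Q 0 0 + d2 * I2 + d3 * I3)"

definition helm_res :: "(real \<times> real \<Rightarrow> complex) \<Rightarrow> (real \<times> real \<Rightarrow> complex) \<Rightarrow> (real \<times> real \<Rightarrow> complex)
    \<Rightarrow> (real \<times> real \<Rightarrow> complex) \<Rightarrow> (real \<times> real \<Rightarrow> complex) \<Rightarrow> real \<Rightarrow> real \<Rightarrow> complex" where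
  "helm_res A B C k P x0 z0 =
     vector_derivative (\<lambda>t. A (t, z0) * vector_derivative (\<lambda>s. P (s, z0)) (at t)) (at x0)
   + vector_derivative (\<lambda>t. B (x0, t) * vector_derivative (\<lambda>s. P (x0, s)) (at t)) (at z0)
   + C (x0, z0) * (k (x0, z0))\<^sup>2 * P (x0, z0)"

end

theory Submission
  imports Defs "HOL-Computational_Algebra.Polynomial"
begin

definition ordh :: "(real \<Rightarrow> complex) \<Rightarrow> nat \<Rightarrow> bool" where
  "ordh f N \<longleftrightarrow> (\<exists>M \<delta>. \<delta> > 0 \<and> (\<forall>h. 0 < h \<and> h < \<delta> \<longrightarrow> cmod (f h) \<le> M * h ^ N))"

lemma ordhI: "\<delta> > 0 \<Longrightarrow> (\<And>h. 0 < h \<Longrightarrow> h < \<delta> \<Longrightarrow> cmod (f h) \<le> M * h ^ N) \<Longrightarrow> ordh f N"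
  unfolding ordh_def by blast

lemma ordhE:
  assumes "ordh f N"
  obtains M \<delta> where "\<delta> > 0" "M \<ge> 0" "\<And>h. 0 < h \<Longrightarrow> h < \<delta> \<Longrightarrow> cmod (f h) \<le> M * h ^ N"
proof -
  obtain M \<delta> where d: "\<delta> > 0" "\<And>h. 0 < h \<Longrightarrow> h < \<delta> \<Longrightarrow> cmod (f h) \<le> M * h ^ N"
    using assms unfolding ordh_def by blast
  have "cmod (f h) \<le> max M 0 * h ^ N" if "0 < h" "h < \<delta>" for h
  proof -
    have "M * h ^ N \<le> max M 0 * h ^ N" using that by (intro mult_right_mono) auto
    then show ?thesis using d(2)[OF that] by linarith
  qed
  then show ?thesis using that[of \<delta> "max M 0"] d(1) by auto
qed

lemma ordh_add[intro]:
  assumes "ordh f N" "ordh g N" shows "ordh (\<lambda>h. f h + g h) N"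
proof -
  obtain M1 d1 where 1: "d1 > 0" "\<And>h. 0 < h \<Longrightarrow> h < d1 \<Longrightarrow> cmod (f h) \<le> M1 * h ^ N"
    using assms(1) ordhE by metis
  obtain M2 d2 where 2: "d2 > 0" "\<And>h. 0 < h \<Longrightarrow> h < d2 \<Longrightarrow> cmod (g h) \<le> M2 * h ^ N"
    using assms(2) ordhE by metis
  show ?thesis
  proof (rule ordhI[of "min d1 d2" _ "M1 + M2"])
    fix h assume h: "0 < h" "h < min d1 d2"
    have "cmod (f h + g h) \<le> cmod (f h) + cmod (g h)" by (rule norm_triangle_ineq)
    also have "\<dots> \<le> M1 * h ^ N + M2 * h ^ N" using 1(2)[of h] 2(2)[of h] h by auto
    finally show "cmod (f h + g h) \<le> (M1 + M2) * h ^ N" by (simp add: algebra_simps)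
  qed (use 1 2 in auto)
qed

lemma ordh_cmult[intro]:
  assumes "ordh f N" shows "ordh (\<lambda>h. c * f h) N"
proof -
  obtain M d where 1: "d > 0" "\<And>h. 0 < h \<Longrightarrow> h < d \<Longrightarrow> cmod (f h) \<le> M * h ^ N"
    using assms(1) ordhE by metis
  show ?thesis
  proof (rule ordhI[of d _ "cmod c * M"])
    fix h assume h: "0 < h" "h < d"
    have "cmod (c * f h) = cmod c * cmod (f h)" by (simp add: norm_mult)
    also have "\<dots> \<le> cmod c * (M * h ^ N)" using 1(2)[OF h] by (intro mult_left_mono) auto
    finally show "cmod (c * f h) \<le> cmod c * M * h ^ N" by (simp add: algebra_simps)
  qed (use 1 in auto)
qed

lemma ordh_uminus[intro]: "ordh f N \<Longrightarrow> ordh (\<lambda>h. - f h) N"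
  using ordh_cmult[of f N "-1"] by simp

lemma ordh_diff[intro]: "ordh f N \<Longrightarrow> ordh g N \<Longrightarrow> ordh (\<lambda>h. f h - g h) N"
  using ordh_add[of f N "\<lambda>h. - g h"] ordh_uminus[of g N] by simp

lemma ordh_mult[intro]:
  assumes "ordh f N" "ordh g K" shows "ordh (\<lambda>h. f h * g h) (N + K)"
proof -
  obtain M1 d1 where 1: "d1 > 0" "M1 \<ge> 0" "\<And>h. 0 < h \<Longrightarrow> h < d1 \<Longrightarrow> cmod (f h) \<le> M1 * h ^ N"
    using assms(1) ordhE by metis
  obtain M2 d2 where 2: "d2 > 0" "M2 \<ge> 0" "\<And>h. 0 < h \<Longrightarrow> h < d2 \<Longrightarrow> cmod (g h) \<le> M2 * h ^ K"
    using assms(2) ordhE by metis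
  show ?thesis
  proof (rule ordhI[of "min d1 d2" _ "M1 * M2"])
    fix h assume h: "0 < h" "h < min d1 d2"
    have "cmod (f h * g h) = cmod (f h) * cmod (g h)" by (simp add: norm_mult)
    also have "\<dots> \<le> (M1 * h ^ N) * (M2 * h ^ K)"
      using 1(3)[of h] 2(3)[of h] h 1(2) by (intro mult_mono) auto
    finally show "cmod (f h * g h) \<le> M1 * M2 * h ^ (N + K)" by (simp add: algebra_simps power_add)
  qed (use 1 2 in auto)
qed

lemma ordh_mono:
  assumes "ordh f N" "K \<le> N" shows "ordh f K"
proof -
  obtain M d where 1: "d > 0" "M \<ge> 0" "\<And>h. 0 < h \<Longrightarrow> h < d \<Longrightarrow> cmod (f h) \<le> M * h ^ N"
    using assms(1) ordhE by metis
  show ?thesis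
  proof (rule ordhI[of "min d 1" _ M])
    fix h assume h: "0 < h" "h < min d 1"
    have "h ^ N \<le> h ^ K" using h assms(2) by (intro power_decreasing) auto
    then have "M * h ^ N \<le> M * h ^ K" using 1(2) by (intro mult_left_mono) auto
    then show "cmod (f h) \<le> M * h ^ K" using 1(3)[of h] h by auto
  qed (use 1 in auto)
qed

lemma ordh_cong:
  assumes "ordh f N" "\<And>h. 0 < h \<Longrightarrow> f h = g h" shows "ordh g N"
  using assms unfolding ordh_def by metis

lemma ordh_const[intro]: "ordh (\<lambda>h. c) 0"
  by (rule ordhI[of 1 _ "cmod c"]) auto

lemma ordh_zero[intro]: "ordh (\<lambda>h. 0) N"
  by (rule ordhI[of 1 _ 0]) auto

lemma ordh_id: "ordh (\<lambda>h. complex_of_real h) 1"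
  by (rule ordhI[of 1 _ 1]) auto

lemma ordh_poly[intro]: "ordh (\<lambda>h. poly P (complex_of_real h)) 0"
proof (induction P)
  case (pCons a p)
  have "ordh (\<lambda>h. a + complex_of_real h * poly p (complex_of_real h)) 0"
    using ordh_mono[OF ordh_mult[OF ordh_id pCons.IH]] by (intro ordh_add) auto
  then show ?case by simp
qed auto

lemma ordh_coeff0:
  assumes "\<And>k. k < N \<Longrightarrow> coeff P k = 0" shows "ordh (\<lambda>h. poly P (complex_of_real h)) N"
  using assms
proof (induction N arbitrary: P)
  case 0 then show ?case by auto
next
  case (Suc N)
  obtain a Q where P: "P = pCons a Q" by (cases P) auto
  have a: "a = 0" using Suc.prems[of 0] P by simp
  have "ordh (\<lambda>h. poly Q (complex_of_real h)) N"
    using Suc.prems[of "Suc _"] P by (intro Suc.IH) auto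
  then have "ordh (\<lambda>h. complex_of_real h * poly Q (complex_of_real h)) (1 + N)"
    by (intro ordh_mult ordh_id)
  then show ?case using P a by simp
qed

lemma ordh_sum:
  assumes "finite S" "\<And>i. i \<in> S \<Longrightarrow> ordh (f i) N" shows "ordh (\<lambda>h. \<Sum>i\<in>S. f i h) N"
  using assms by (induction S rule: finite_induct) auto

lemma ordh_powi:
  assumes "ordh f N" "2 \<le> N" shows "ordh (\<lambda>h. complex_of_real (h powi -2) * f h) (N - 2)"
proof -
  obtain M d where 1: "d > 0" "M \<ge> 0" "\<And>h. 0 < h \<Longrightarrow> h < d \<Longrightarrow> cmod (f h) \<le> M * h ^ N"
    using assms(1) ordhE by metis
  show ?thesis
  proof (rule ordhI[of d _ M])
    fix h :: real assume h: "0 < h" "h < d"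
    have N: "h ^ N = h ^ (N - 2) * h ^ 2" using assms(2) by (metis le_add_diff_inverse2 power_add)
    have "cmod (complex_of_real (h powi -2) * f h) = cmod (f h) / h ^ 2"
      using h by (simp add: norm_mult power_int_minus divide_inverse mult.commute norm_inverse norm_power)
    also have "\<dots> \<le> M * h ^ N / h ^ 2" using 1(3)[OF h] h by (intro divide_right_mono) auto
    also have "\<dots> = M * h ^ (N - 2)" using h by (simp add: N)
    finally show "cmod (complex_of_real (h powi -2) * f h) \<le> M * h ^ (N - 2)" .
  qed (use 1 in auto)
qed

lemma ordh_final:
  assumes "ordh f 4"
  shows "(\<lambda>h. norm (f h)) \<in> O[at_right 0](\<lambda>h. h ^ 4) \<and> (f \<longlongrightarrow> 0) (at_right 0)"
proof -
  obtain M d where 1: "d > 0" "M \<ge> 0" "\<And>h. 0 < h \<Longrightarrow> h < d \<Longrightarrow> cmod (f h) \<le> M * h ^ 4"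
    using assms(1) ordhE by metis
  have ev: "eventually (\<lambda>h. cmod (f h) \<le> M * h ^ 4) (at_right (0::real))"
    unfolding eventually_at_right_field using 1 by blast
  have "(\<lambda>h. norm (f h)) \<in> O[at_right 0](\<lambda>h. h ^ 4)"
    by (rule bigoI[where c=M]) (use ev in \<open>auto elim!: eventually_mono\<close>)
  moreover have "(f \<longlongrightarrow> 0) (at_right 0)"
  proof (rule Lim_null_comparison[OF ev])
    have "((\<lambda>h::real. M * h ^ 4) \<longlongrightarrow> M * 0 ^ 4) (at_right 0)"
      by (intro tendsto_intros)
    then show "((\<lambda>h::real. M * h ^ 4) \<longlongrightarrow> 0) (at_right 0)" by simp
  qed
  ultimately show ?thesis ..
qed

lemma Re_mult_ofr: "Re (x * complex_of_real r) = Re x * r" by simp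
lemma Im_mult_ofr: "Im (x * complex_of_real r) = Im x * r" by simp

lemma ctaylor:
  fixes g :: "nat \<Rightarrow> real \<Rightarrow> complex"
  assumes d: "\<And>i t. t \<in> closed_segment a b \<Longrightarrow> i \<le> n \<Longrightarrow> (g i has_vector_derivative g (Suc i) t) (at t)"
    and B: "\<And>t. t \<in> closed_segment a b \<Longrightarrow> cmod (g (Suc n) t) \<le> B"
  shows "cmod (g 0 b - (\<Sum>i\<le>n. g i a * complex_of_real ((b-a)^i / fact i))) \<le> 2 * B * \<bar>b-a\<bar>^(Suc n) / fact n"
proof -
  have cs: "convex (closed_segment a b)" "a \<in> closed_segment a b" "b \<in> closed_segment a b"
    by (simp_all add: convex_closed_segment)
  have re: "norm (Re (g 0 b) - (\<Sum>i\<le>n. Re (g i a) * (b-a)^i / fact i)) \<le> B * norm (b-a)^Suc n / fact n"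
  proof (rule field_Taylor[where S="closed_segment a b" and f="\<lambda>i t. Re (g i t)", OF cs(1) _ _ cs(2) cs(3)])
    show "((\<lambda>t. Re (g i t)) has_field_derivative Re (g (Suc i) x)) (at x within closed_segment a b)"
      if "x \<in> closed_segment a b" "i \<le> n" for i x
      using d[OF that] by (rule has_field_derivative_Re[OF has_vector_derivative_at_within])
    show "norm (Re (g (Suc n) x)) \<le> B" if "x \<in> closed_segment a b" for x
      using B[OF that] abs_Re_le_cmod[of "g (Suc n) x"] by simp
  qed
  have im: "norm (Im (g 0 b) - (\<Sum>i\<le>n. Im (g i a) * (b-a)^i / fact i)) \<le> B * norm (b-a)^Suc n / fact n"
  proof (rule field_Taylor[where S="closed_segment a b" and f="\<lambda>i t. Im (g i t)", OF cs(1) _ _ cs(2) cs(3)])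
    show "((\<lambda>t. Im (g i t)) has_field_derivative Im (g (Suc i) x)) (at x within closed_segment a b)"
      if "x \<in> closed_segment a b" "i \<le> n" for i x
      using d[OF that] by (rule has_field_derivative_Im[OF has_vector_derivative_at_within])
    show "norm (Im (g (Suc n) x)) \<le> B" if "x \<in> closed_segment a b" for x
      using B[OF that] abs_Im_le_cmod[of "g (Suc n) x"] by simp
  qed
  define z where "z = g 0 b - (\<Sum>i\<le>n. g i a * complex_of_real ((b-a)^i / fact i))"
  have zr: "Re z = Re (g 0 b) - (\<Sum>i\<le>n. Re (g i a) * (b-a)^i / fact i)"
    unfolding z_def by (simp only: minus_complex.sel Re_sum Re_mult_ofr times_divide_eq_right)
  have zi: "Im z = Im (g 0 b) - (\<Sum>i\<le>n. Im (g i a) * (b-a)^i / fact i)"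
    unfolding z_def by (simp only: minus_complex.sel Im_sum Im_mult_ofr times_divide_eq_right)
  have "cmod z \<le> \<bar>Re z\<bar> + \<bar>Im z\<bar>" by (rule cmod_le)
  also have "\<dots> \<le> B * norm (b-a)^Suc n / fact n + B * norm (b-a)^Suc n / fact n"
    using re im unfolding zr zi real_norm_def by (rule add_mono)
  also have "\<dots> = 2 * B * \<bar>b-a\<bar>^(Suc n) / fact n" by (simp only: real_norm_def)
  finally show ?thesis unfolding z_def .
qed

definition sm2D :: "(real \<times> real) set \<Rightarrow> (real \<times> real \<Rightarrow> complex) \<Rightarrow> (nat \<Rightarrow> nat \<Rightarrow> real \<times> real \<Rightarrow> complex) \<Rightarrow> bool" where
  "sm2D U f D \<longleftrightarrow> (\<forall>y\<in>U. D 0 0 y = f y) \<and>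
      (\<forall>i j. continuous_on U (D i j)) \<and>
      (\<forall>i j x z. (x, z) \<in> U \<longrightarrow>
         ((\<lambda>t. D i j (t, z)) has_vector_derivative D (Suc i) j (x, z)) (at x) \<and>
         ((\<lambda>t. D i j (x, t)) has_vector_derivative D i (Suc j) (x, z)) (at z))"

lemma smooth2_sm2D: "smooth2_on U f \<Longrightarrow> \<exists>D. sm2D U f D"
  unfolding smooth2_on_def sm2D_def by blast

definition Tay :: "(nat \<Rightarrow> nat \<Rightarrow> real \<times> real \<Rightarrow> complex) \<Rightarrow> real \<Rightarrow> real \<Rightarrow> nat \<Rightarrow> real \<Rightarrow> real \<Rightarrow> real \<Rightarrow> complex" where
  "Tay D x0 z0 N \<alpha> \<beta> h = (\<Sum>i<N. \<Sum>j<N-i. D i j (x0, z0) * complex_of_real ((\<alpha>*h)^i / fact i)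
       * complex_of_real ((\<beta>*h)^j / fact j))"

lemma div_fact_le: "0 \<le> (x::real) \<Longrightarrow> x / fact n \<le> x"
proof -
  assume x: "0 \<le> x"
  have "x \<le> x * fact n" using fact_ge_1[of n] x by (metis mult_left_mono mult.right_neutral)
  then show ?thesis by (simp add: divide_le_eq)
qed

lemma expand2:
  assumes sm: "sm2D U f D" and U: "open U" "(x0, z0) \<in> U" and N: "0 < N"
  shows "ordh (\<lambda>h. f (x0 + \<alpha>*h, z0 + \<beta>*h) - Tay D x0 z0 N \<alpha> \<beta> h) N"
proof -
  have D0: "\<And>y. y \<in> U \<Longrightarrow> D 0 0 y = f y" and cont: "\<And>i j. continuous_on U (D i j)"
    and dx: "\<And>i j x z. (x, z) \<in> U \<Longrightarrow> ((\<lambda>t. D i j (t, z)) has_vector_derivative D (Suc i) j (x, z)) (at x)"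
    and dz: "\<And>i j x z. (x, z) \<in> U \<Longrightarrow> ((\<lambda>t. D i j (x, t)) has_vector_derivative D i (Suc j) (x, z)) (at z)"
    using sm unfolding sm2D_def by blast+
  obtain r where r: "r > 0" "ball (x0, z0) r \<subseteq> U" using U open_contains_ball by blast
  define \<rho> where "\<rho> = r / 3"
  have \<rho>: "\<rho> > 0" using r by (simp add: \<rho>_def)
  define K where "K = {x0-\<rho>..x0+\<rho>} \<times> {z0-\<rho>..z0+\<rho>}"
  have KU: "K \<subseteq> U"
  proof
    fix y assume "y \<in> K"
    then obtain t z where y: "y = (t, z)" "\<bar>t - x0\<bar> \<le> \<rho>" "\<bar>z - z0\<bar> \<le> \<rho>"
      unfolding K_def by (cases y) auto
    have "dist (t, z) (x0, z0) = sqrt ((dist t x0)\<^sup>2 + (dist z z0)\<^sup>2)" by (simp add: dist_Pair_Pair)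
    also have "\<dots> \<le> dist t x0 + dist z z0" using sqrt_sum_squares_le_sum_abs[of "dist t x0" "dist z z0"] by simp
    also have "\<dots> < r" using y r by (simp add: dist_real_def \<rho>_def)
    finally show "y \<in> U" using r y by (auto simp: dist_commute)
  qed
  have cK: "compact K" unfolding K_def by (intro compact_Times compact_Icc)
  have "\<forall>ij. \<exists>M. \<forall>y\<in>K. cmod (D (fst ij) (snd ij) y) \<le> M"
  proof
    fix ij :: "nat \<times> nat"
    have c: "compact (D (fst ij) (snd ij) ` K)"
      by (rule compact_continuous_image[OF continuous_on_subset[OF cont KU] cK])
    show "\<exists>M. \<forall>y\<in>K. cmod (D (fst ij) (snd ij) y) \<le> M"
      using compact_imp_bounded[OF c] unfolding bounded_iff by auto
  qed
  from choice[OF this] obtain Mb where MbA: "\<forall>ij. \<forall>y\<in>K. cmod (D (fst ij) (snd ij) y) \<le> Mb ij"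
    by blast
  have Mb: "cmod (D i j y) \<le> Mb (i, j)" if "y \<in> K" for i j y
    using MbA that by auto
  have x0K: "(x0, z0) \<in> K" unfolding K_def using \<rho> by auto
  have Mb0: "Mb (i, j) \<ge> 0" for i j by (rule order_trans[OF norm_ge_zero Mb[OF x0K]])
  define \<delta> where "\<delta> = \<rho> / (\<bar>\<alpha>\<bar> + \<bar>\<beta>\<bar> + 1)"
  have \<delta>: "\<delta> > 0" using \<rho> by (simp add: \<delta>_def)
  define CC where "CC = 2 * Mb (N, 0) * \<bar>\<alpha>\<bar>^N + (\<Sum>i<N. \<bar>\<alpha>\<bar>^i * (2 * Mb (i, N - i) * \<bar>\<beta>\<bar>^(N-i)))"
  show ?thesis
  proof (rule ordhI[OF \<delta>, of _ CC])
    fix h :: real assume h: "0 < h" "h < \<delta>"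
    have ah: "\<bar>\<alpha>*h\<bar> \<le> \<rho>"
    proof -
      have "\<bar>\<alpha>\<bar> * h \<le> (\<bar>\<alpha>\<bar> + \<bar>\<beta>\<bar> + 1) * \<delta>" using h by (intro mult_mono) auto
      then show ?thesis using h by (simp add: \<delta>_def abs_mult)
    qed
    have bh: "\<bar>\<beta>*h\<bar> \<le> \<rho>"
    proof -
      have "\<bar>\<beta>\<bar> * h \<le> (\<bar>\<alpha>\<bar> + \<bar>\<beta>\<bar> + 1) * \<delta>" using h by (intro mult_mono) auto
      then show ?thesis using h by (simp add: \<delta>_def abs_mult)
    qed
    define z where "z = z0 + \<beta>*h"
    define x1 where "x1 = x0 + \<alpha>*h"
    have zin: "z \<in> {z0-\<rho>..z0+\<rho>}" using bh by (auto simp: z_def)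
    have segx: "closed_segment x0 x1 \<subseteq> {x0-\<rho>..x0+\<rho>}"
      using ah by (auto simp: closed_segment_eq_real_ivl x1_def split: if_splits)
    have segz: "closed_segment z0 z \<subseteq> {z0-\<rho>..z0+\<rho>}"
      using bh by (auto simp: closed_segment_eq_real_ivl z_def split: if_splits)
    have NN: "Suc (N - 1) = N" using N by simp
    have s1: "cmod (D 0 0 (x1, z) - (\<Sum>i\<le>N-1. D i 0 (x0, z) * complex_of_real ((x1-x0)^i / fact i)))
               \<le> 2 * Mb (N, 0) * \<bar>x1-x0\<bar>^(Suc (N-1)) / fact (N-1)"
    proof (rule ctaylor[where g="\<lambda>i t. D i 0 (t, z)"])
      fix i t assume t: "t \<in> closed_segment x0 x1"
      then have "(t, z) \<in> K" using segx zin unfolding K_def by auto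
      then show "((\<lambda>t. D i 0 (t, z)) has_vector_derivative D (Suc i) 0 (t, z)) (at t)"
        using KU dx by blast
      show "cmod (D (Suc (N - 1)) 0 (t, z)) \<le> Mb (N, 0)" using Mb[OF \<open>(t,z) \<in> K\<close>] NN by simp
    qed
    have s2: "cmod (D i 0 (x0, z) - (\<Sum>j\<le>N-1-i. D i j (x0, z0) * complex_of_real ((z-z0)^j / fact j)))
               \<le> 2 * Mb (i, N - i) * \<bar>z-z0\<bar>^(Suc (N-1-i)) / fact (N-1-i)" if i: "i < N" for i
    proof (rule ctaylor[where g="\<lambda>j t. D i j (x0, t)"])
      fix j t assume t: "t \<in> closed_segment z0 z"
      then have "(x0, t) \<in> K" using segz \<rho> unfolding K_def by auto
      then show "((\<lambda>t. D i j (x0, t)) has_vector_derivative D i (Suc j) (x0, t)) (at t)"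
        using KU dz by blast
      show "cmod (D i (Suc (N - 1 - i)) (x0, t)) \<le> Mb (i, N - i)"
        using Mb[OF \<open>(x0,t) \<in> K\<close>] i by (simp add: Suc_diff_Suc)
    qed
    have fx: "f (x1, z) = D 0 0 (x1, z)"
    proof -
      have "(x1, z) \<in> K" using ah zin by (auto simp: K_def x1_def)
      then show ?thesis using D0 KU by auto
    qed
    define w where "w i = complex_of_real ((\<alpha>*h)^i / fact i)" for i
    define R2 where "R2 i = D i 0 (x0, z) - (\<Sum>j<N-i. D i j (x0, z0) * complex_of_real ((\<beta>*h)^j / fact j))" for i
    have sumx: "{..N-1} = {..<N}" using N by auto
    have sumz: "{..N-1-i} = {..<N-i}" if "i < N" for i using that by auto
    have eq: "f (x0 + \<alpha>*h, z0 + \<beta>*h) - Tay D x0 z0 N \<alpha> \<beta> h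
        = (D 0 0 (x1, z) - (\<Sum>i<N. D i 0 (x0, z) * w i)) + (\<Sum>i<N. w i * R2 i)"
      unfolding Tay_def R2_def w_def fx[symmetric] x1_def[symmetric] z_def[symmetric]
      by (simp add: algebra_simps sum_subtractf sum_distrib_left)
    have b1: "cmod (D 0 0 (x1, z) - (\<Sum>i<N. D i 0 (x0, z) * w i)) \<le> 2 * Mb (N, 0) * \<bar>\<alpha>\<bar>^N * h^N"
    proof -
      have "cmod (D 0 0 (x1, z) - (\<Sum>i<N. D i 0 (x0, z) * w i)) \<le> 2 * Mb (N, 0) * \<bar>x1-x0\<bar>^N / fact (N-1)"
        using s1 unfolding sumx NN by (simp add: w_def x1_def)
      also have "\<dots> \<le> 2 * Mb (N, 0) * \<bar>x1-x0\<bar>^N"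
        using Mb0 by (intro div_fact_le) auto
      also have "\<dots> = 2 * Mb (N, 0) * \<bar>\<alpha>\<bar>^N * h^N" using h by (simp add: x1_def abs_mult power_mult_distrib)
      finally show ?thesis .
    qed
    have b2: "cmod (w i * R2 i) \<le> h^N * (\<bar>\<alpha>\<bar>^i * (2 * Mb (i, N - i) * \<bar>\<beta>\<bar>^(N-i)))" if i: "i < N" for i
    proof -
      have "cmod (R2 i) \<le> 2 * Mb (i, N - i) * \<bar>z-z0\<bar>^(N-i) / fact (N-1-i)"
        using s2[OF i] unfolding sumz[OF i] R2_def using i by (simp add: z_def Suc_diff_Suc)
      also have "\<dots> \<le> 2 * Mb (i, N - i) * \<bar>z-z0\<bar>^(N-i)"
        using Mb0 by (intro div_fact_le) auto
      finally have r: "cmod (R2 i) \<le> 2 * Mb (i, N - i) * (\<bar>\<beta>\<bar> * h)^(N-i)"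
        using h by (simp add: z_def abs_mult)
      have wb: "cmod (w i) \<le> (\<bar>\<alpha>\<bar> * h)^i"
      proof -
        have "cmod (w i) = \<bar>\<alpha>*h\<bar>^i / fact i" by (simp add: w_def norm_divide norm_power power_abs norm_mult abs_mult)
        also have "\<dots> \<le> \<bar>\<alpha>*h\<bar>^i" by (intro div_fact_le) auto
        finally show ?thesis using h by (simp add: abs_mult)
      qed
      have "cmod (w i * R2 i) \<le> (\<bar>\<alpha>\<bar> * h)^i * (2 * Mb (i, N - i) * (\<bar>\<beta>\<bar> * h)^(N-i))"
        unfolding norm_mult using wb r h by (intro mult_mono) auto
      also have "\<dots> = h^i * h^(N-i) * (\<bar>\<alpha>\<bar>^i * (2 * Mb (i, N - i) * \<bar>\<beta>\<bar>^(N-i)))"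
        by (simp add: power_mult_distrib mult_ac)
      also have "h^i * h^(N-i) = h^N" using i by (simp add: power_add[symmetric])
      finally show ?thesis .
    qed
    have "cmod (\<Sum>i<N. w i * R2 i) \<le> (\<Sum>i<N. h^N * (\<bar>\<alpha>\<bar>^i * (2 * Mb (i, N - i) * \<bar>\<beta>\<bar>^(N-i))))"
      using b2 by (intro sum_norm_le) auto
    also have "\<dots> = h^N * (\<Sum>i<N. \<bar>\<alpha>\<bar>^i * (2 * Mb (i, N - i) * \<bar>\<beta>\<bar>^(N-i)))"
      by (simp add: sum_distrib_left)
    finally have b3: "cmod (\<Sum>i<N. w i * R2 i) \<le> h^N * (\<Sum>i<N. \<bar>\<alpha>\<bar>^i * (2 * Mb (i, N - i) * \<bar>\<beta>\<bar>^(N-i)))" .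
    have "cmod (f (x0 + \<alpha>*h, z0 + \<beta>*h) - Tay D x0 z0 N \<alpha> \<beta> h)
        \<le> cmod (D 0 0 (x1, z) - (\<Sum>i<N. D i 0 (x0, z) * w i)) + cmod (\<Sum>i<N. w i * R2 i)"
      unfolding eq by (rule norm_triangle_ineq)
    also have "\<dots> \<le> CC * h ^ N"
    proof -
      have "CC * h^N = 2 * Mb (N, 0) * \<bar>\<alpha>\<bar>^N * h^N + h^N * (\<Sum>i<N. \<bar>\<alpha>\<bar>^i * (2 * Mb (i, N - i) * \<bar>\<beta>\<bar>^(N-i)))"
        unfolding CC_def by (simp add: ring_distribs mult_ac)
      then show ?thesis using b1 b3 by linarith
    qed
    finally show "cmod (f (x0 + \<alpha>*h, z0 + \<beta>*h) - Tay D x0 z0 N \<alpha> \<beta> h) \<le> CC * h ^ N" .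
  qed
qed

definition Pe :: "nat \<Rightarrow> (nat \<Rightarrow> nat \<Rightarrow> complex) \<Rightarrow> complex \<Rightarrow> complex \<Rightarrow> complex poly" where
 "Pe N e a b = (\<Sum>k<N. monom (\<Sum>i\<le>k. e i (k-i) * a^i * b^(k-i)) k)"

lemma coeff_Pe: "coeff (Pe N e a b) k = (if k < N then (\<Sum>i\<le>k. e i (k-i) * a^i * b^(k-i)) else 0)"
  unfolding Pe_def by (simp add: coeff_sum)

lemma poly_Pe: "poly (Pe N e a b) x = (\<Sum>k<N. (\<Sum>i\<le>k. e i (k-i) * a^i * b^(k-i)) * x^k)"
  unfolding Pe_def by (simp add: poly_sum poly_monom)

definition cf :: "(nat \<Rightarrow> nat \<Rightarrow> real \<times> real \<Rightarrow> complex) \<Rightarrow> real \<Rightarrow> real \<Rightarrow> nat \<Rightarrow> nat \<Rightarrow> complex" where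
  "cf D x0 z0 i j = D i j (x0, z0) / complex_of_real (fact i * fact j)"

lemma pow_split: "i \<le> k \<Longrightarrow> (x::'a::monoid_mult) ^ i * x ^ (k - i) = x ^ k"
  by (metis le_add_diff_inverse power_add)

lemma Tay_poly: "Tay D x0 z0 N \<alpha> \<beta> h = poly (Pe N (cf D x0 z0) (complex_of_real \<alpha>) (complex_of_real \<beta>)) (complex_of_real h)"
proof -
  define G where "G i j = D i j (x0, z0) * complex_of_real ((\<alpha>*h)^i / fact i) * complex_of_real ((\<beta>*h)^j / fact j)" for i j
  have "Tay D x0 z0 N \<alpha> \<beta> h = (\<Sum>i<N. \<Sum>j<N-i. G i j)" unfolding Tay_def G_def ..
  also have "\<dots> = (\<Sum>(i,j)\<in>(SIGMA i:{..<N}. {..<N-i}). G i j)" by (rule sum.Sigma) auto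
  also have "(SIGMA i:{..<N}. {..<N-i}) = {(i,j). i+j < N}" by auto
  also have "(\<Sum>(i,j)\<in>{(i,j). i+j < N}. G i j) = (\<Sum>k<N. \<Sum>i\<le>k. G i (k - i))" by (rule sum.triangle_reindex)
  also have "\<dots> = (\<Sum>k<N. (\<Sum>i\<le>k. cf D x0 z0 i (k-i) * complex_of_real \<alpha>^i * complex_of_real \<beta>^(k-i)) * complex_of_real h^k)"
  proof (rule sum.cong[OF refl])
    fix k assume "k \<in> {..<N}"
    have "G i (k - i) = cf D x0 z0 i (k-i) * complex_of_real \<alpha>^i * complex_of_real \<beta>^(k-i) * complex_of_real h^k"
      if "i \<in> {..k}" for i
    proof -
      have hk: "complex_of_real h ^ i * complex_of_real h ^ (k - i) = complex_of_real h ^ k" using that by (intro pow_split) auto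
      have "G i (k - i) = D i (k-i) (x0, z0) / complex_of_real (fact i * fact (k-i)) * complex_of_real \<alpha>^i * complex_of_real \<beta>^(k-i)
            * (complex_of_real h ^ i * complex_of_real h ^ (k - i))"
        unfolding G_def by (simp add: power_mult_distrib field_simps)
      then show ?thesis unfolding hk cf_def by simp
    qed
    then show "(\<Sum>i\<le>k. G i (k - i)) = (\<Sum>i\<le>k. cf D x0 z0 i (k-i) * complex_of_real \<alpha>^i * complex_of_real \<beta>^(k-i)) * complex_of_real h^k"
      by (simp add: sum_distrib_right)
  qed
  also have "\<dots> = poly (Pe N (cf D x0 z0) (complex_of_real \<alpha>) (complex_of_real \<beta>)) (complex_of_real h)"
    by (simp add: poly_Pe)
  finally show ?thesis .
qed

lemma expandP:
  assumes "sm2D U f D" "open U" "(x0, z0) \<in> U" "0 < N"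
  shows "ordh (\<lambda>h. f (x0 + \<alpha>*h, z0 + \<beta>*h) - poly (Pe N (cf D x0 z0) (complex_of_real \<alpha>) (complex_of_real \<beta>)) (complex_of_real h)) N"
  using expand2[OF assms, of \<alpha> \<beta>] unfolding Tay_poly .

lemma cf00: "sm2D U f D \<Longrightarrow> (x0, z0) \<in> U \<Longrightarrow> cf D x0 z0 0 0 = f (x0, z0)"
  unfolding cf_def sm2D_def by simp

lemma ofr_abs: "complex_of_real \<bar>real_of_int i\<bar> = complex_of_int \<bar>i\<bar>"
  by (metis of_int_abs of_real_of_int_eq)

lemma L5_bilin: "L5 a1 a2 a3 a4 u - L5 c1 c2 c3 c4 v = L5 (a1-c1) (a2-c2) (a3-c3) (a4-c4) u + L5 c1 c2 c3 c4 (\<lambda>i. u i - v i)"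
  unfolding L5_def by (simp add: field_simps)

lemma L5_ordh:
  assumes "ordh a1 N" "ordh a2 N" "ordh a3 N" "ordh a4 N" "\<And>i. ordh (\<lambda>h. u h i) K"
  shows "ordh (\<lambda>h. L5 (a1 h) (a2 h) (a3 h) (a4 h) (u h)) (N + K)"
  unfolding L5_def by (intro ordh_add ordh_diff ordh_mult ordh_cmult ordh_uminus assms)

definition L5p :: "complex poly \<Rightarrow> complex poly \<Rightarrow> complex poly \<Rightarrow> complex poly \<Rightarrow> (int \<Rightarrow> complex poly) \<Rightarrow> complex poly" where
  "L5p am3 am1 ap1 ap3 u =
     - smult (9/8) (am1 * (smult (1/24) (u (-2)) - smult (9/8) (u (-1)) + smult (9/8) (u 0) - smult (1/24) (u 1)))
     + smult (1/24) (am3 * (- smult (11/12) (u (-2)) + smult (17/24) (u (-1)) + smult (3/8) (u 0) - smult (5/24) (u 1) + smult (1/24) (u 2)))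
     - smult (1/24) (ap3 * (- smult (1/24) (u (-2)) + smult (5/24) (u (-1)) - smult (3/8) (u 0) - smult (17/24) (u 1) + smult (11/12) (u 2)))
     + smult (9/8) (ap1 * (smult (1/24) (u (-1)) - smult (9/8) (u 0) + smult (9/8) (u 1) - smult (1/24) (u 2)))"

lemma poly_L5p: "poly (L5p P1 P2 P3 P4 PU) x = L5 (poly P1 x) (poly P2 x) (poly P3 x) (poly P4 x) (\<lambda>i. poly (PU i) x)"
  unfolding L5p_def L5_def by (simp add: algebra_simps)

definition phatp :: "complex \<Rightarrow> complex \<Rightarrow> (nat \<Rightarrow> nat \<Rightarrow> complex) \<Rightarrow> complex \<Rightarrow> int \<Rightarrow> complex poly" where
  "phatp b1 b2 c g i = (let P = (\<lambda>a b. Pe 6 c (of_int a) (of_int b * g)); s = \<bar>i\<bar> in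
      if i = 0 then smult b1 (P 0 0)
      else smult b1 (P i 0) + smult (b2/2) (P i s + P i (-s) - P 0 s - P 0 (-s)))"

definition ptildep :: "complex \<Rightarrow> complex \<Rightarrow> (nat \<Rightarrow> nat \<Rightarrow> complex) \<Rightarrow> complex \<Rightarrow> int \<Rightarrow> complex poly" where
  "ptildep b1 b2 c g i = (let P = (\<lambda>a b. Pe 6 c (of_int a) (of_int b * g)); s = \<bar>i\<bar> in
      if i = 0 then smult b1 (P 0 0)
      else smult b1 (P 0 i) + smult (b2/2) (P s i + P (-s) i - P s 0 - P (-s) 0))"

definition LxP where "LxP a b1 b2 c g = L5p (Pe 6 a (-3/2) 0) (Pe 6 a (-1/2) 0) (Pe 6 a (1/2) 0) (Pe 6 a (3/2) 0) (phatp b1 b2 c g)"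
definition LzP where "LzP a b1 b2 c g = L5p (Pe 6 a 0 (-3/2*g)) (Pe 6 a 0 (-1/2*g)) (Pe 6 a 0 (1/2*g)) (Pe 6 a 0 (3/2*g)) (ptildep b1 b2 c g)"

lemma LxP_coeff:
  assumes "k < 6"
  shows "coeff (LxP a (1-b2) b2 c g) k = (if k = 2 then a 1 0 * c 1 0 + 2 * a 0 0 * c 2 0 else 0)"
proof -
  have "k = 0 \<or> k = 1 \<or> k = 2 \<or> k = 3 \<or> k = 4 \<or> k = 5" using assms by auto
  then show ?thesis
    unfolding LxP_def L5p_def phatp_def Let_def
    by (elim disjE; simp add: coeff_mult coeff_Pe eval_nat_numeral; simp add: field_simps)
qed

lemma LzP_coeff:
  assumes "k < 6"
  shows "coeff (LzP a (1-b2) b2 c g) k = (if k = 2 then g^2 * (a 0 1 * c 0 1 + 2 * a 0 0 * c 0 2) else 0)"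
proof -
  have "k = 0 \<or> k = 1 \<or> k = 2 \<or> k = 3 \<or> k = 4 \<or> k = 5" using assms by auto
  then show ?thesis
    unfolding LzP_def L5p_def ptildep_def Let_def
    by (elim disjE; simp add: coeff_mult coeff_Pe eval_nat_numeral; simp add: field_simps)
qed

lemma Lx_part:
  assumes smA: "sm2D U A DA" and smp: "sm2D U p Dp" and U: "open U" "(x0, z0) \<in> U" and b: "b1 + b2 = 1"
  shows "ordh (\<lambda>h. Lx A x0 z0 h (phat b1 b2 p x0 z0 \<gamma> h)
            - (DA 1 0 (x0,z0) * Dp 1 0 (x0,z0) + DA 0 0 (x0,z0) * Dp 2 0 (x0,z0))) 4"
proof -
  define cA where "cA = cf DA x0 z0"
  define cp where "cp = cf Dp x0 z0"
  define g where "g = complex_of_real \<gamma>"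
  define T where "T = cA 1 0 * cp 1 0 + 2 * cA 0 0 * cp 2 0"
  have T: "T = DA 1 0 (x0,z0) * Dp 1 0 (x0,z0) + DA 0 0 (x0,z0) * Dp 2 0 (x0,z0)"
    by (simp add: T_def cA_def cp_def cf_def numeral_2_eq_2)
  have b1: "b1 = 1 - b2" using b by (simp add: algebra_simps)
  have EA: "ordh (\<lambda>h. A (x0 + \<alpha>*h, z0) - poly (Pe 6 cA (complex_of_real \<alpha>) 0) (complex_of_real h)) 6" for \<alpha>
    using expandP[OF smA U, of 6 \<alpha> 0] by (simp add: cA_def)
  have Ep: "ordh (\<lambda>h. p (x0 + \<alpha>*h, z0 + \<beta>*h) - poly (Pe 6 cp (complex_of_real \<alpha>) (complex_of_real \<beta>)) (complex_of_real h)) 6" for \<alpha> \<beta>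
    using expandP[OF smp U, of 6 \<alpha> \<beta>] by (simp add: cp_def)
  define aa where "aa j h = A (x0 + real_of_int j / 2 * h, z0)" for j h
  define TA where "TA j h = poly (Pe 6 cA (of_int j / 2) 0) (complex_of_real h)" for j h
  have eA: "ordh (\<lambda>h. aa j h - TA j h) 6" for j
    using EA[of "real_of_int j / 2"] by (simp add: aa_def TA_def)
  have TA0: "ordh (TA j) 0" for j unfolding TA_def by (rule ordh_poly)
  define uu where "uu h = phat b1 b2 p x0 z0 \<gamma> h" for h
  define Tu where "Tu h i = poly (phatp b1 b2 cp g i) (complex_of_real h)" for h i
  let ?E = "\<lambda>a b h. p (x0 + real_of_int a * h, z0 + (real_of_int b * \<gamma>) * h)
      - poly (Pe 6 cp (complex_of_real (real_of_int a)) (complex_of_real (real_of_int b * \<gamma>))) (complex_of_real h)"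
  have eu: "ordh (\<lambda>h. uu h i - Tu h i) 6" for i
  proof (cases "i = 0")
    case True
    have "ordh (\<lambda>h. b1 * ?E 0 0 h) 6" by (intro ordh_cmult Ep)
    then show ?thesis
      by (rule ordh_cong) (simp add: True uu_def Tu_def phat_def phatp_def gv_def Let_def algebra_simps)
  next
    case False
    define s where "s = \<bar>i\<bar>"
    have "ordh (\<lambda>h. b1 * ?E i 0 h + b2/2 * (?E i s h + ?E i (-s) h - ?E 0 s h - ?E 0 (-s) h)) 6"
      by (intro ordh_add ordh_diff ordh_cmult Ep)
    then show ?thesis
      by (rule ordh_cong) (simp add: False uu_def Tu_def phat_def phatp_def gv_def Let_def s_def g_def ofr_abs algebra_simps)
  qed
  have u0: "ordh (\<lambda>h. uu h i) 0" for i
  proof -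
    have "ordh (\<lambda>h. (uu h i - Tu h i) + Tu h i) 0"
      using ordh_mono[OF eu[of i]] unfolding Tu_def by (intro ordh_add ordh_poly) auto
    then show ?thesis by (rule ordh_cong) simp
  qed
  have o1: "ordh (\<lambda>h. L5 (aa (-3) h - TA (-3) h) (aa (-1) h - TA (-1) h) (aa 1 h - TA 1 h) (aa 3 h - TA 3 h) (uu h)) 6"
    using L5_ordh[of _ 6 _ _ _ uu 0] eA u0 by simp
  have o2: "ordh (\<lambda>h. L5 (TA (-3) h) (TA (-1) h) (TA 1 h) (TA 3 h) (\<lambda>i. uu h i - Tu h i)) 6"
    using L5_ordh[of _ 0 _ _ _ "\<lambda>h i. uu h i - Tu h i" 6] TA0 eu by simp
  have o3: "ordh (\<lambda>h. poly (LxP cA b1 b2 cp g - monom T 2) (complex_of_real h)) 6"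
  proof (rule ordh_coeff0)
    fix k :: nat assume "k < 6"
    then show "coeff (LxP cA b1 b2 cp g - monom T 2) k = 0"
      unfolding b1 using LxP_coeff[of k cA b2 cp g] by (simp add: T_def coeff_monom)
  qed
  have pL: "poly (LxP cA b1 b2 cp g) (complex_of_real h) = L5 (TA (-3) h) (TA (-1) h) (TA 1 h) (TA 3 h) (Tu h)" for h
    unfolding LxP_def poly_L5p TA_def Tu_def by simp
  have "ordh (\<lambda>h. complex_of_real (h powi -2) *
     (L5 (aa (-3) h - TA (-3) h) (aa (-1) h - TA (-1) h) (aa 1 h - TA 1 h) (aa 3 h - TA 3 h) (uu h)
      + L5 (TA (-3) h) (TA (-1) h) (TA 1 h) (TA 3 h) (\<lambda>i. uu h i - Tu h i)
      + poly (LxP cA b1 b2 cp g - monom T 2) (complex_of_real h))) 4"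
    using ordh_powi[OF ordh_add[OF ordh_add[OF o1 o2] o3]] by simp
  then show ?thesis
  proof (rule ordh_cong)
    fix h :: real assume h: "0 < h"
    have e1: "L5 (aa (-3) h - TA (-3) h) (aa (-1) h - TA (-1) h) (aa 1 h - TA 1 h) (aa 3 h - TA 3 h) (uu h)
      + L5 (TA (-3) h) (TA (-1) h) (TA 1 h) (TA 3 h) (\<lambda>i. uu h i - Tu h i)
      = L5 (aa (-3) h) (aa (-1) h) (aa 1 h) (aa 3 h) (uu h) - L5 (TA (-3) h) (TA (-1) h) (TA 1 h) (TA 3 h) (Tu h)"
      by (rule L5_bilin[symmetric])
    have e2: "poly (LxP cA b1 b2 cp g - monom T 2) (complex_of_real h) = L5 (TA (-3) h) (TA (-1) h) (TA 1 h) (TA 3 h) (Tu h) - T * complex_of_real h ^ 2"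
      by (simp add: pL poly_monom)
    have e3: "Lx A x0 z0 h (uu h) = complex_of_real (h powi -2) * L5 (aa (-3) h) (aa (-1) h) (aa 1 h) (aa 3 h) (uu h)"
      unfolding Lx_def Let_def aa_def ..
    have e4: "complex_of_real (h powi -2) * (T * complex_of_real h ^ 2) = T"
      using h by (simp add: power_int_minus field_simps)
    show "complex_of_real (h powi -2) *
     (L5 (aa (-3) h - TA (-3) h) (aa (-1) h - TA (-1) h) (aa 1 h - TA 1 h) (aa 3 h - TA 3 h) (uu h)
      + L5 (TA (-3) h) (TA (-1) h) (TA 1 h) (TA 3 h) (\<lambda>i. uu h i - Tu h i)
      + poly (LxP cA b1 b2 cp g - monom T 2) (complex_of_real h))
      = Lx A x0 z0 h (phat b1 b2 p x0 z0 \<gamma> h) - (DA 1 0 (x0,z0) * Dp 1 0 (x0,z0) + DA 0 0 (x0,z0) * Dp 2 0 (x0,z0))"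
      unfolding e1 e2 T[symmetric] uu_def[symmetric] e3 using e4 by (simp add: algebra_simps)
  qed
qed

lemma Lz_part:
  assumes smB: "sm2D U B DB" and smp: "sm2D U p Dp" and U: "open U" "(x0, z0) \<in> U" and b: "b1 + b2 = 1"
    and \<gamma>: "\<gamma> > 0"
  shows "ordh (\<lambda>h. Lz B x0 z0 \<gamma> h (ptilde b1 b2 p x0 z0 \<gamma> h)
            - (DB 0 1 (x0,z0) * Dp 0 1 (x0,z0) + DB 0 0 (x0,z0) * Dp 0 2 (x0,z0))) 4"
proof -
  define cB where "cB = cf DB x0 z0"
  define cp where "cp = cf Dp x0 z0"
  define g where "g = complex_of_real \<gamma>"
  define T where "T = cB 0 1 * cp 0 1 + 2 * cB 0 0 * cp 0 2"
  have T: "T = DB 0 1 (x0,z0) * Dp 0 1 (x0,z0) + DB 0 0 (x0,z0) * Dp 0 2 (x0,z0)"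
    by (simp add: T_def cB_def cp_def cf_def numeral_2_eq_2)
  have b1: "b1 = 1 - b2" using b by (simp add: algebra_simps)
  have EB: "ordh (\<lambda>h. B (x0, z0 + \<beta>*h) - poly (Pe 6 cB 0 (complex_of_real \<beta>)) (complex_of_real h)) 6" for \<beta>
    using expandP[OF smB U, of 6 0 \<beta>] by (simp add: cB_def)
  have Ep: "ordh (\<lambda>h. p (x0 + \<alpha>*h, z0 + \<beta>*h) - poly (Pe 6 cp (complex_of_real \<alpha>) (complex_of_real \<beta>)) (complex_of_real h)) 6" for \<alpha> \<beta>
    using expandP[OF smp U, of 6 \<alpha> \<beta>] by (simp add: cp_def)
  define bb where "bb l h = B (x0, z0 + real_of_int l / 2 * \<gamma> * h)" for l h
  define TB where "TB l h = poly (Pe 6 cB 0 (of_int l / 2 * g)) (complex_of_real h)" for l h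
  have eB: "ordh (\<lambda>h. bb l h - TB l h) 6" for l
    using EB[of "real_of_int l / 2 * \<gamma>"] by (simp add: bb_def TB_def g_def)
  have TB0: "ordh (TB l) 0" for l unfolding TB_def by (rule ordh_poly)
  define uu where "uu h = ptilde b1 b2 p x0 z0 \<gamma> h" for h
  define Tu where "Tu h i = poly (ptildep b1 b2 cp g i) (complex_of_real h)" for h i
  let ?E = "\<lambda>a b h. p (x0 + real_of_int a * h, z0 + (real_of_int b * \<gamma>) * h)
      - poly (Pe 6 cp (complex_of_real (real_of_int a)) (complex_of_real (real_of_int b * \<gamma>))) (complex_of_real h)"
  have eu: "ordh (\<lambda>h. uu h i - Tu h i) 6" for i
  proof (cases "i = 0")
    case True
    have "ordh (\<lambda>h. b1 * ?E 0 0 h) 6" by (intro ordh_cmult Ep)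
    then show ?thesis
      by (rule ordh_cong) (simp add: True uu_def Tu_def ptilde_def ptildep_def gv_def Let_def algebra_simps)
  next
    case False
    define s where "s = \<bar>i\<bar>"
    have "ordh (\<lambda>h. b1 * ?E 0 i h + b2/2 * (?E s i h + ?E (-s) i h - ?E s 0 h - ?E (-s) 0 h)) 6"
      by (intro ordh_add ordh_diff ordh_cmult Ep)
    then show ?thesis
      by (rule ordh_cong) (simp add: False uu_def Tu_def ptilde_def ptildep_def gv_def Let_def s_def g_def ofr_abs algebra_simps)
  qed
  have u0: "ordh (\<lambda>h. uu h i) 0" for i
  proof -
    have "ordh (\<lambda>h. (uu h i - Tu h i) + Tu h i) 0"
      using ordh_mono[OF eu[of i]] unfolding Tu_def by (intro ordh_add ordh_poly) auto
    then show ?thesis by (rule ordh_cong) simp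
  qed
  have o1: "ordh (\<lambda>h. L5 (bb (-3) h - TB (-3) h) (bb (-1) h - TB (-1) h) (bb 1 h - TB 1 h) (bb 3 h - TB 3 h) (uu h)) 6"
    using L5_ordh[of _ 6 _ _ _ uu 0] eB u0 by simp
  have o2: "ordh (\<lambda>h. L5 (TB (-3) h) (TB (-1) h) (TB 1 h) (TB 3 h) (\<lambda>i. uu h i - Tu h i)) 6"
    using L5_ordh[of _ 0 _ _ _ "\<lambda>h i. uu h i - Tu h i" 6] TB0 eu by simp
  have o3: "ordh (\<lambda>h. poly (LzP cB b1 b2 cp g - monom (g^2 * T) 2) (complex_of_real h)) 6"
  proof (rule ordh_coeff0)
    fix k :: nat assume "k < 6"
    then show "coeff (LzP cB b1 b2 cp g - monom (g^2 * T) 2) k = 0"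
      unfolding b1 using LzP_coeff[of k cB b2 cp g] by (simp add: T_def coeff_monom)
  qed
  have pL: "poly (LzP cB b1 b2 cp g) (complex_of_real h) = L5 (TB (-3) h) (TB (-1) h) (TB 1 h) (TB 3 h) (Tu h)" for h
    unfolding LzP_def poly_L5p TB_def Tu_def by simp
  have "ordh (\<lambda>h. complex_of_real (\<gamma> powi -2) * (complex_of_real (h powi -2) *
     (L5 (bb (-3) h - TB (-3) h) (bb (-1) h - TB (-1) h) (bb 1 h - TB 1 h) (bb 3 h - TB 3 h) (uu h)
      + L5 (TB (-3) h) (TB (-1) h) (TB 1 h) (TB 3 h) (\<lambda>i. uu h i - Tu h i)
      + poly (LzP cB b1 b2 cp g - monom (g^2 * T) 2) (complex_of_real h)))) 4"
    using ordh_cmult[OF ordh_powi[OF ordh_add[OF ordh_add[OF o1 o2] o3]]] by simp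
  then show ?thesis
  proof (rule ordh_cong)
    fix h :: real assume h: "0 < h"
    have e1: "L5 (bb (-3) h - TB (-3) h) (bb (-1) h - TB (-1) h) (bb 1 h - TB 1 h) (bb 3 h - TB 3 h) (uu h)
      + L5 (TB (-3) h) (TB (-1) h) (TB 1 h) (TB 3 h) (\<lambda>i. uu h i - Tu h i)
      = L5 (bb (-3) h) (bb (-1) h) (bb 1 h) (bb 3 h) (uu h) - L5 (TB (-3) h) (TB (-1) h) (TB 1 h) (TB 3 h) (Tu h)"
      by (rule L5_bilin[symmetric])
    have e2: "poly (LzP cB b1 b2 cp g - monom (g^2 * T) 2) (complex_of_real h) = L5 (TB (-3) h) (TB (-1) h) (TB 1 h) (TB 3 h) (Tu h) - g^2 * T * complex_of_real h ^ 2"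
      by (simp add: pL poly_monom)
    have e3: "Lz B x0 z0 \<gamma> h (uu h) = complex_of_real (\<gamma> powi -2) * (complex_of_real (h powi -2) * L5 (bb (-3) h) (bb (-1) h) (bb 1 h) (bb 3 h) (uu h))"
      unfolding Lz_def Let_def bb_def by (simp add: power_int_mult_distrib)
    have e4: "complex_of_real (\<gamma> powi -2) * (complex_of_real (h powi -2) * (g^2 * T * complex_of_real h ^ 2)) = T"
      using h \<gamma> by (simp add: power_int_minus field_simps g_def)
    show "complex_of_real (\<gamma> powi -2) * (complex_of_real (h powi -2) *
     (L5 (bb (-3) h - TB (-3) h) (bb (-1) h - TB (-1) h) (bb 1 h - TB 1 h) (bb 3 h - TB 3 h) (uu h)
      + L5 (TB (-3) h) (TB (-1) h) (TB 1 h) (TB 3 h) (\<lambda>i. uu h i - Tu h i)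
      + poly (LzP cB b1 b2 cp g - monom (g^2 * T) 2) (complex_of_real h)))
      = Lz B x0 z0 \<gamma> h (ptilde b1 b2 p x0 z0 \<gamma> h) - (DB 0 1 (x0,z0) * Dp 0 1 (x0,z0) + DB 0 0 (x0,z0) * Dp 0 2 (x0,z0))"
      unfolding e1 e2 T[symmetric] uu_def[symmetric] e3 using e4 by (simp add: algebra_simps)
  qed
qed

definition conv :: "(nat \<Rightarrow> nat \<Rightarrow> complex) \<Rightarrow> (nat \<Rightarrow> nat \<Rightarrow> complex) \<Rightarrow> nat \<Rightarrow> nat \<Rightarrow> complex" where
  "conv e1 e2 i j = (\<Sum>a\<le>i. \<Sum>b\<le>j. e1 a b * e2 (i - a) (j - b))"

lemma conv_coeff:
  assumes "k < 4"
  shows "coeff (Pe 4 e1 a b * Pe 4 e2 a b - Pe 4 (conv e1 e2) a b) k = 0"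
proof -
  have "k = 0 \<or> k = 1 \<or> k = 2 \<or> k = 3" using assms by auto
  then show ?thesis
    unfolding conv_def
    by (elim disjE; simp add: coeff_mult coeff_Pe eval_nat_numeral; simp add: field_simps)
qed

lemma prod_exp:
  assumes "ordh (\<lambda>h. f h - poly P1 (complex_of_real h)) N" "ordh (\<lambda>h. g h - poly P2 (complex_of_real h)) N"
  shows "ordh (\<lambda>h. f h * g h - poly (P1 * P2) (complex_of_real h)) N"
proof -
  have g0: "ordh g 0"
  proof -
    have "ordh (\<lambda>h. (g h - poly P2 (complex_of_real h)) + poly P2 (complex_of_real h)) 0"
      using ordh_mono[OF assms(2)] by (intro ordh_add ordh_poly) auto
    then show ?thesis by (rule ordh_cong) simp
  qed
  have "ordh (\<lambda>h. (f h - poly P1 (complex_of_real h)) * g h + poly P1 (complex_of_real h) * (g h - poly P2 (complex_of_real h))) N"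
    using ordh_mult[OF assms(1) g0] ordh_mult[OF ordh_poly[of P1] assms(2)] by (intro ordh_add) auto
  then show ?thesis by (rule ordh_cong) (simp add: algebra_simps)
qed

lemma conv_exp:
  assumes "ordh (\<lambda>h. f h - poly (Pe 4 e1 a b) (complex_of_real h)) 4" "ordh (\<lambda>h. g h - poly (Pe 4 e2 a b) (complex_of_real h)) 4"
  shows "ordh (\<lambda>h. f h * g h - poly (Pe 4 (conv e1 e2) a b) (complex_of_real h)) 4"
proof -
  have "ordh (\<lambda>h. (f h * g h - poly (Pe 4 e1 a b * Pe 4 e2 a b) (complex_of_real h))
     + poly (Pe 4 e1 a b * Pe 4 e2 a b - Pe 4 (conv e1 e2) a b) (complex_of_real h)) 4"
    using prod_exp[OF assms] ordh_coeff0[of 4, OF conv_coeff] by (intro ordh_add) auto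
  then show ?thesis by (rule ordh_cong) simp
qed

definition SPoly where
  "SPoly d1 d2 d3 e g = (let P = (\<lambda>a b. Pe 4 e (of_int a) (of_int b * g)) in
     smult d1 (P 0 0)
   + smult d2 (smult (1/3) (P 1 0 + P (-1) 0 + P 0 1 + P 0 (-1)) - smult (1/12) (P 2 0 + P (-2) 0 + P 0 2 + P 0 (-2)))
   + smult d3 (smult (1/3) (P (-1) (-1) + P 1 1 + P (-1) 1 + P 1 (-1)) - smult (1/12) (P (-2) (-2) + P 2 2 + P (-2) 2 + P 2 (-2))))"

lemma SPoly_coeff:
  assumes "k < 4"
  shows "coeff (SPoly (1 - d2 - d3) d2 d3 e g) k = (if k = 0 then e 0 0 else 0)"
proof -
  have "k = 0 \<or> k = 1 \<or> k = 2 \<or> k = 3" using assms by auto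
  then show ?thesis
    unfolding SPoly_def Let_def
    by (elim disjE; simp add: coeff_Pe eval_nat_numeral; simp add: field_simps)
qed

lemma I_part:
  assumes E: "\<And>\<alpha> \<beta>. ordh (\<lambda>h. (k (x0 + \<alpha>*h, z0 + \<beta>*h))\<^sup>2 * C (x0 + \<alpha>*h, z0 + \<beta>*h) * P (x0 + \<alpha>*h, z0 + \<beta>*h)
        - poly (Pe 4 e (complex_of_real \<alpha>) (complex_of_real \<beta>)) (complex_of_real h)) 4"
    and d: "d1 + d2 + d3 = 1"
  shows "ordh (\<lambda>h. Itilde d1 d2 d3 k C P x0 z0 \<gamma> h - e 0 0) 4"
proof -
  define g where "g = complex_of_real \<gamma>"
  have d1: "d1 = 1 - d2 - d3" using d by (simp add: algebra_simps)
  let ?E = "\<lambda>a b h. (k (x0 + real_of_int a * h, z0 + (real_of_int b * \<gamma>) * h))\<^sup>2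
       * C (x0 + real_of_int a * h, z0 + (real_of_int b * \<gamma>) * h) * P (x0 + real_of_int a * h, z0 + (real_of_int b * \<gamma>) * h)
      - poly (Pe 4 e (complex_of_real (real_of_int a)) (complex_of_real (real_of_int b * \<gamma>))) (complex_of_real h)"
  have o3: "ordh (\<lambda>h. poly (SPoly d1 d2 d3 e g - [:e 0 0:]) (complex_of_real h)) 4"
  proof (rule ordh_coeff0)
    fix k :: nat assume "k < 4"
    then show "coeff (SPoly d1 d2 d3 e g - [:e 0 0:]) k = 0"
      unfolding d1 using SPoly_coeff[of k d2 d3 e g] by (cases k) auto
  qed
  have "ordh (\<lambda>h. poly (SPoly d1 d2 d3 e g - [:e 0 0:]) (complex_of_real h) +
     (d1 * ?E 0 0 h
   + d2 * (1/3 * (?E 1 0 h + ?E (-1) 0 h + ?E 0 1 h + ?E 0 (-1) h) - 1/12 * (?E 2 0 h + ?E (-2) 0 h + ?E 0 2 h + ?E 0 (-2) h))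
   + d3 * (1/3 * (?E (-1) (-1) h + ?E 1 1 h + ?E (-1) 1 h + ?E 1 (-1) h) - 1/12 * (?E (-2) (-2) h + ?E 2 2 h + ?E (-2) 2 h + ?E 2 (-2) h)))) 4"
    using o3 by (intro ordh_add ordh_diff ordh_cmult E)
  then show ?thesis
    by (rule ordh_cong) (simp add: Itilde_def SPoly_def gv_def Let_def g_def algebra_simps)
qed

lemma vd_x:
  assumes sm: "sm2D U f D" and U: "open U" "(x0, z0) \<in> U" and smA: "sm2D U A DA"
  shows "vector_derivative (\<lambda>t. A (t, z0) * vector_derivative (\<lambda>s. f (s, z0)) (at t)) (at x0)
       = DA 1 0 (x0, z0) * D 1 0 (x0, z0) + DA 0 0 (x0, z0) * D 2 0 (x0, z0)"
proof -
  have D0: "\<And>y. y \<in> U \<Longrightarrow> D 0 0 y = f y"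
    and dx: "\<And>i j x z. (x, z) \<in> U \<Longrightarrow> ((\<lambda>t. D i j (t, z)) has_vector_derivative D (Suc i) j (x, z)) (at x)"
    using sm unfolding sm2D_def by blast+
  have A0: "\<And>y. y \<in> U \<Longrightarrow> DA 0 0 y = A y"
    and dAx: "\<And>i j x z. (x, z) \<in> U \<Longrightarrow> ((\<lambda>t. DA i j (t, z)) has_vector_derivative DA (Suc i) j (x, z)) (at x)"
    using smA unfolding sm2D_def by blast+
  define S where "S = (\<lambda>t. (t, z0)) -` U"
  have S: "open S" unfolding S_def by (rule continuous_open_vimage[OF U(1)]) (intro continuous_intros)
  have x0S: "x0 \<in> S" using U by (simp add: S_def)
  have vd: "vector_derivative (\<lambda>s. f (s, z0)) (at t) = D 1 0 (t, z0)" if "t \<in> S" for t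
  proof (rule vector_derivative_at)
    show "((\<lambda>s. f (s, z0)) has_vector_derivative D 1 0 (t, z0)) (at t)"
    proof (rule has_vector_derivative_transform_within_open[OF _ S that])
      have tU: "(t, z0) \<in> U" using that by (simp add: S_def)
      show "((\<lambda>s. D 0 0 (s, z0)) has_vector_derivative D 1 0 (t, z0)) (at t)"
        using dx[of t z0 0 0, OF tU] by simp
    qed (auto simp: S_def D0)
  qed
  have "((\<lambda>t. DA 0 0 (t, z0) * D 1 0 (t, z0)) has_vector_derivative
      DA 0 0 (x0, z0) * D 2 0 (x0, z0) + DA 1 0 (x0, z0) * D 1 0 (x0, z0)) (at x0)"
    using has_vector_derivative_mult[OF dAx[of x0 z0 0 0, OF U(2)] dx[of x0 z0 1 0, OF U(2)]] U by (simp add: numeral_2_eq_2)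
  then have "((\<lambda>t. A (t, z0) * vector_derivative (\<lambda>s. f (s, z0)) (at t)) has_vector_derivative
      DA 0 0 (x0, z0) * D 2 0 (x0, z0) + DA 1 0 (x0, z0) * D 1 0 (x0, z0)) (at x0)"
    by (rule has_vector_derivative_transform_within_open[OF _ S x0S]) (auto simp: vd S_def A0)
  then show ?thesis by (simp add: vector_derivative_at algebra_simps)
qed

lemma vd_z:
  assumes sm: "sm2D U f D" and U: "open U" "(x0, z0) \<in> U" and smA: "sm2D U A DA"
  shows "vector_derivative (\<lambda>t. A (x0, t) * vector_derivative (\<lambda>s. f (x0, s)) (at t)) (at z0)
       = DA 0 1 (x0, z0) * D 0 1 (x0, z0) + DA 0 0 (x0, z0) * D 0 2 (x0, z0)"
proof -
  have D0: "\<And>y. y \<in> U \<Longrightarrow> D 0 0 y = f y"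
    and dz: "\<And>i j x z. (x, z) \<in> U \<Longrightarrow> ((\<lambda>t. D i j (x, t)) has_vector_derivative D i (Suc j) (x, z)) (at z)"
    using sm unfolding sm2D_def by blast+
  have A0: "\<And>y. y \<in> U \<Longrightarrow> DA 0 0 y = A y"
    and dAz: "\<And>i j x z. (x, z) \<in> U \<Longrightarrow> ((\<lambda>t. DA i j (x, t)) has_vector_derivative DA i (Suc j) (x, z)) (at z)"
    using smA unfolding sm2D_def by blast+
  define S where "S = (\<lambda>t. (x0, t)) -` U"
  have S: "open S" unfolding S_def by (rule continuous_open_vimage[OF U(1)]) (intro continuous_intros)
  have z0S: "z0 \<in> S" using U by (simp add: S_def)
  have vd: "vector_derivative (\<lambda>s. f (x0, s)) (at t) = D 0 1 (x0, t)" if "t \<in> S" for t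
  proof (rule vector_derivative_at)
    show "((\<lambda>s. f (x0, s)) has_vector_derivative D 0 1 (x0, t)) (at t)"
    proof (rule has_vector_derivative_transform_within_open[OF _ S that])
      have tU: "(x0, t) \<in> U" using that by (simp add: S_def)
      show "((\<lambda>s. D 0 0 (x0, s)) has_vector_derivative D 0 1 (x0, t)) (at t)"
        using dz[of x0 t 0 0, OF tU] by simp
    qed (auto simp: S_def D0)
  qed
  have "((\<lambda>t. DA 0 0 (x0, t) * D 0 1 (x0, t)) has_vector_derivative
      DA 0 0 (x0, z0) * D 0 2 (x0, z0) + DA 0 1 (x0, z0) * D 0 1 (x0, z0)) (at z0)"
    using has_vector_derivative_mult[OF dAz[of x0 z0 0 0, OF U(2)] dz[of x0 z0 0 1, OF U(2)]] U by (simp add: numeral_2_eq_2)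
  then have "((\<lambda>t. A (x0, t) * vector_derivative (\<lambda>s. f (x0, s)) (at t)) has_vector_derivative
      DA 0 0 (x0, z0) * D 0 2 (x0, z0) + DA 0 1 (x0, z0) * D 0 1 (x0, z0)) (at z0)"
    by (rule has_vector_derivative_transform_within_open[OF _ S z0S]) (auto simp: vd S_def A0)
  then show ?thesis by (simp add: vector_derivative_at algebra_simps)
qed

theorem proposition1:
  fixes A B C k p :: "real \<times> real \<Rightarrow> complex"
    and \<gamma> x0 z0 :: real and b1 b2 d1 d2 d3 :: complex and U :: "(real \<times> real) set"
  assumes "\<gamma> > 0" and "b1 + b2 = 1" and "d1 + d2 + d3 = 1"
    and "open U" and "(x0, z0) \<in> U"
    and "smooth2_on U A" and "smooth2_on U B" and "smooth2_on U C"
    and "smooth2_on U k" and "smooth2_on U p"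
  shows "(\<lambda>h. norm (Ltilde b1 b2 A B p x0 z0 \<gamma> h + Itilde d1 d2 d3 k C p x0 z0 \<gamma> h
                     - helm_res A B C k p x0 z0)) \<in> O[at_right 0](\<lambda>h. h ^ 4)
     \<and> ((\<lambda>h. Ltilde b1 b2 A B p x0 z0 \<gamma> h + Itilde d1 d2 d3 k C p x0 z0 \<gamma> h
                     - helm_res A B C k p x0 z0) \<longlongrightarrow> 0) (at_right 0)"
proof -
  note U = assms(4,5)
  obtain DA where smA: "sm2D U A DA" using smooth2_sm2D[OF assms(6)] by blast
  obtain DB where smB: "sm2D U B DB" using smooth2_sm2D[OF assms(7)] by blast
  obtain DC where smC: "sm2D U C DC" using smooth2_sm2D[OF assms(8)] by blast
  obtain Dk where smk: "sm2D U k Dk" using smooth2_sm2D[OF assms(9)] by blast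
  obtain Dp where smp: "sm2D U p Dp" using smooth2_sm2D[OF assms(10)] by blast
  define eQ where "eQ = conv (conv (conv (cf Dk x0 z0) (cf Dk x0 z0)) (cf DC x0 z0)) (cf Dp x0 z0)"
  have EQ: "ordh (\<lambda>h. (k (x0 + \<alpha>*h, z0 + \<beta>*h))\<^sup>2 * C (x0 + \<alpha>*h, z0 + \<beta>*h) * p (x0 + \<alpha>*h, z0 + \<beta>*h)
        - poly (Pe 4 eQ (complex_of_real \<alpha>) (complex_of_real \<beta>)) (complex_of_real h)) 4" for \<alpha> \<beta>
  proof -
    have "ordh (\<lambda>h. k (x0 + \<alpha>*h, z0 + \<beta>*h) * k (x0 + \<alpha>*h, z0 + \<beta>*h) * C (x0 + \<alpha>*h, z0 + \<beta>*h) * p (x0 + \<alpha>*h, z0 + \<beta>*h)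
        - poly (Pe 4 eQ (complex_of_real \<alpha>) (complex_of_real \<beta>)) (complex_of_real h)) 4"
      unfolding eQ_def
      by (intro conv_exp expandP[OF smk U] expandP[OF smC U] expandP[OF smp U]) auto
    then show ?thesis by (rule ordh_cong) (simp add: power2_eq_square)
  qed
  have eQ0: "eQ 0 0 = C (x0, z0) * (k (x0, z0))\<^sup>2 * p (x0, z0)"
    using cf00[OF smk U(2)] cf00[OF smC U(2)] cf00[OF smp U(2)]
    by (simp add: eQ_def conv_def power2_eq_square)
  note o1 = Lx_part[OF smA smp U assms(2), of \<gamma>]
  note o2 = Lz_part[OF smB smp U assms(2) assms(1)]
  note o3 = I_part[OF EQ assms(3), of \<gamma>]
  have helm: "helm_res A B C k p x0 z0 =
      (DA 1 0 (x0,z0) * Dp 1 0 (x0,z0) + DA 0 0 (x0,z0) * Dp 2 0 (x0,z0))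
    + (DB 0 1 (x0,z0) * Dp 0 1 (x0,z0) + DB 0 0 (x0,z0) * Dp 0 2 (x0,z0)) + eQ 0 0"
    unfolding helm_res_def vd_x[OF smp U smA] vd_z[OF smp U smB] eQ0 ..
  have "ordh (\<lambda>h. (Lx A x0 z0 h (phat b1 b2 p x0 z0 \<gamma> h)
            - (DA 1 0 (x0,z0) * Dp 1 0 (x0,z0) + DA 0 0 (x0,z0) * Dp 2 0 (x0,z0)))
        + (Lz B x0 z0 \<gamma> h (ptilde b1 b2 p x0 z0 \<gamma> h)
            - (DB 0 1 (x0,z0) * Dp 0 1 (x0,z0) + DB 0 0 (x0,z0) * Dp 0 2 (x0,z0)))
        + (Itilde d1 d2 d3 k C p x0 z0 \<gamma> h - eQ 0 0)) 4"
    using o1 o2 o3 by (intro ordh_add)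
  then have "ordh (\<lambda>h. Ltilde b1 b2 A B p x0 z0 \<gamma> h + Itilde d1 d2 d3 k C p x0 z0 \<gamma> h
                     - helm_res A B C k p x0 z0) 4"
    by (rule ordh_cong) (simp add: Ltilde_def helm algebra_simps)
  then show ?thesis by (rule ordh_final)
qed

end
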